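(* Let $a,b,c\in\mathbb{RP}^1$ be distinct. Let $U=(u_1,\dots,u_6)$ be a 6-tuple of nonzero vectors in $\mathbb R^2$ with $[u_1]=[u_2]=[u_3]=a$ and $[u_4]=[u_5]=[u_6]=b$ (so its configuration is $3\cdot\{a,b\}$), and let $U'=(u'_1,\dots,u'_6)$ be a 6-tuple of nonzero vectors with $[u'_1]=[u'_2]=[u'_3]=a$, $[u'_4]=[u'_5]=b$ and $[u'_6]=c$ (configuration $\{3\cdot a,2\cdot b,c\}$). Then $\Phi(U)$ and $\Phi(U')$ generate the same ray of $C_{6,2}$.
   Context: $[u]\in\mathbb{RP}^1$ denotes the point determined by a nonzero $u\in\mathbb R^2$. For a 6-tuple $U$ of vectors, $\Phi(U)\in\mathbb R^{15}$ is the vector with coordinates $\mathrm V_{I_1}\mathrm V_{I_2}\mathrm V_{I_3}$ indexed by the 15 partitions $I_1|I_2|I_3$ of $[6]$ into pairs, where $\mathrm V_{\{i,j\}}=\tfrac12|\det(u_i,u_j)|$ is the mixed area of the segments $[0,u_i],[0,u_j]$. $C_{6,2}$ is the conic hull of $\Phi(\mathcal Z_2^6)$, where $\Phi(Z)$ for zonoids $Z=(Z_1,\dots,Z_6)$ in $\mathbb R^2$ is defined in the same way with $\mathrm V_{\{i,j\}}=\mathrm V(Z_i,Z_j)$ the mixed area. *)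

theory Defs
  imports "HOL-Analysis.Analysis"
begin

text \<open>Nonzero vectors of the plane represent points of RP^1; two nonzero vectors
  determine the same point iff one is a nonzero multiple of the other.\<close>
definition same_point :: "real^2 \<Rightarrow> real^2 \<Rightarrow> bool" where
  "same_point u v \<longleftrightarrow> u \<noteq> 0 \<and> v \<noteq> 0 \<and> (\<exists>t. t \<noteq> 0 \<and> u = t *\<^sub>R v)"

definition det2 :: "real^2 \<Rightarrow> real^2 \<Rightarrow> real" where
  "det2 u v = u$1 * v$2 - u$2 * v$1"

text \<open>Mixed area of the segments [0,u] and [0,v].\<close>
definition seg_mixed_area :: "real^2 \<Rightarrow> real^2 \<Rightarrow> real" where
  "seg_mixed_area u v = \<bar>det2 u v\<bar> / 2"

definition pair_partitions :: "nat set set set" where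
  "pair_partitions = {P. (\<Union>P = {1..6::nat}) \<and> (\<forall>I\<in>P. card I = 2)
      \<and> (\<forall>I\<in>P. \<forall>J\<in>P. I \<noteq> J \<longrightarrow> I \<inter> J = {})}"

definition V_pair :: "(nat \<Rightarrow> real^2) \<Rightarrow> nat set \<Rightarrow> real" where
  "V_pair U I = seg_mixed_area (U (Min I)) (U (Max I))"

definition Phi :: "(nat \<Rightarrow> real^2) \<Rightarrow> nat set set \<Rightarrow> real" where
  "Phi U P = (\<Prod>I\<in>P. V_pair U I)"

definition same_ray :: "(nat set set \<Rightarrow> real) \<Rightarrow> (nat set set \<Rightarrow> real) \<Rightarrow> bool" where
  "same_ray x y \<longleftrightarrow> (\<exists>P\<in>pair_partitions. x P \<noteq> 0) \<and> (\<exists>P\<in>pair_partitions. y P \<noteq> 0)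
     \<and> (\<exists>t>0. \<forall>P\<in>pair_partitions. x P = t * y P)"

end

theory Submission
  imports Defs
begin

lemma det2_nz:
  assumes "u \<noteq> 0" "v \<noteq> 0" "\<not> same_point u v"
  shows "det2 u v \<noteq> 0"
proof
  assume d: "det2 u v = 0"
  hence d': "u$1 * v$2 = u$2 * v$1" by (simp add: det2_def)
  have v: "v$1 \<noteq> 0 \<or> v$2 \<noteq> 0" using assms(2) by (auto simp: vec_eq_iff forall_2)
  have u: "u$1 \<noteq> 0 \<or> u$2 \<noteq> 0" using assms(1) by (auto simp: vec_eq_iff forall_2)
  show False
  proof (cases "v$1 = 0")
    case False
    define t where "t = u$1 / v$1"
    have "u = t *\<^sub>R v" using False d' unfolding t_def
      by (auto simp: vec_eq_iff forall_2 field_simps)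
    moreover have "t \<noteq> 0" using False d' u unfolding t_def by auto
    ultimately show False using assms unfolding same_point_def by blast
  next
    case True
    hence v2: "v$2 \<noteq> 0" using v by auto
    define t where "t = u$2 / v$2"
    have "u = t *\<^sub>R v" using True v2 d' unfolding t_def
      by (auto simp: vec_eq_iff forall_2 field_simps)
    moreover have "t \<noteq> 0" using True v2 d' u unfolding t_def by auto
    ultimately show False using assms unfolding same_point_def by blast
  qed
qed

lemma det2_scale1: "det2 (s *\<^sub>R a) v = s * det2 a v"
  by (simp add: det2_def algebra_simps)

lemma det2_scale2: "det2 v (s *\<^sub>R a) = s * det2 v a"
  by (simp add: det2_def algebra_simps)

lemma det2_self: "det2 a a = 0"
  by (simp add: det2_def algebra_simps)

lemma pp_facts:
  assumes "P \<in> pair_partitions"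
  shows "\<Union>P = {1..6}" "\<forall>I\<in>P. card I = 2" "\<forall>I\<in>P. \<forall>J\<in>P. I \<noteq> J \<longrightarrow> I \<inter> J = {}"
    "finite P"
proof -
  show U: "\<Union>P = {1..6}" "\<forall>I\<in>P. card I = 2" "\<forall>I\<in>P. \<forall>J\<in>P. I \<noteq> J \<longrightarrow> I \<inter> J = {}"
    using assms by (auto simp: pair_partitions_def)
  have "P \<subseteq> Pow {1..6}" using U(1) by auto
  thus "finite P" using finite_subset by blast
qed

lemma cross:
  assumes P: "P \<in> pair_partitions" and noA: "\<forall>I\<in>P. \<not> I \<subseteq> {1,2,3}" and I: "I \<in> P"
  shows "\<exists>x\<in>{1,2,3}. \<exists>y\<in>{4,5,6}. I = {x,y}"
proof -
  note U = pp_facts(1)[OF P] and C = pp_facts(2)[OF P] and D = pp_facts(3)[OF P]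
  obtain x y where xy: "x\<noteq>y" "I={x,y}" using C I card_2_iff by metis
  have xy6: "x \<in> {1..6}" "y\<in>{1..6}" using U I xy by auto
  have notB: "\<not> I \<subseteq> {4,5,6}"
  proof
    assume IB: "I \<subseteq> {4,5,6}"
    have xyB: "x \<in> {4,5,6}" "y \<in> {4,5,6}" using IB xy by auto
    define m where "m = 15 - x - y"
    have m: "m \<in> {4,5,6::nat}" "m \<noteq> x" "m \<noteq> y" using xyB xy(1) unfolding m_def by auto
    have key: "m \<in> J" if "J\<in>P" "i\<in>J" "i\<in>{1,2,3}" for J i
    proof -
      have "J \<noteq> I" using that IB by auto
      hence JI: "J \<inter> I = {}" using D that I by auto
      have "\<not> J \<subseteq> {1,2,3}" using noA that(1) by blast
      then obtain z where z: "z\<in>J" "z\<notin>{1,2,3}" by blast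
      have "z \<in> {1..6}" using U that z by auto
      hence zB: "z \<in> {4,5,6}" using z(2) by auto
      have "z \<noteq> x" "z \<noteq> y" using z(1) JI xy(2) by auto
      hence "z = m" using zB xyB xy(1) unfolding m_def by auto
      thus "m\<in>J" using z by simp
    qed
    have "1 \<in> \<Union>P" "2 \<in> \<Union>P" using U by auto
    then obtain J1 J2 where J1: "J1 \<in> P" "1 \<in> J1" and J2: "J2 \<in> P" "2 \<in> J2" by blast
    have m1: "m \<in> J1" using key J1 by auto
    have m2: "m \<in> J2" using key J2 by auto
    show False
    proof (cases "J1 = J2")
      case True
      have "{1,2,m} \<subseteq> J1" using m1 J1 J2 True by auto
      moreover have "card {1,2,m::nat} = 3" using m by auto
      moreover have "finite J1" using C J1(1) by (metis card.infinite zero_neq_numeral)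
      ultimately have "3 \<le> card J1" by (metis card_mono)
      thus False using C J1 by auto
    next
      case False
      thus False using D J1 J2 m1 m2 by blast
    qed
  qed
  have nA: "\<not> I \<subseteq> {1,2,3}" using noA I by auto
  have xs: "x \<in> {1,2,3} \<or> x \<in> {4,5,6}" "y \<in> {1,2,3} \<or> y \<in> {4,5,6}"
    using xy6 by auto
  show ?thesis
  proof (cases "x \<in> {1,2,3}")
    case True
    hence "y \<in> {4,5,6}" using nA xy(2) xs(2) by blast
    thus ?thesis using True xy(2) by blast
  next
    case False
    hence "x \<in> {4,5,6}" using xs(1) by blast
    hence "y \<in> {1,2,3}" using notB xy(2) xs(2) by blast
    moreover have "I = {y,x}" using xy(2) by blast
    ultimately show ?thesis using \<open>x \<in> {4,5,6}\<close> by blast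
  qed
qed

lemma phi_val:
  assumes P: "P \<in> pair_partitions" and W: "\<forall>x\<in>{1,2,3}. W x = s x *\<^sub>R a"
  shows "Phi W P = (if \<forall>I\<in>P. \<not> I \<subseteq> {1,2,3} then
     (\<Prod>x\<in>{1,2,3::nat}. \<bar>s x\<bar>) * (\<Prod>y\<in>{4,5,6::nat}. \<bar>det2 a (W y)\<bar>/2) else 0)"
proof (cases "\<forall>I\<in>P. \<not> I \<subseteq> {1,2,3}")
  case False
  then obtain I where I: "I \<in> P" "I \<subseteq> {1,2,3}" by auto
  obtain x y where xy: "x\<noteq>y" "I={x,y}" using pp_facts(2)[OF P] I card_2_iff by metis
  have "Min I \<in> {1,2,3}" "Max I \<in> {1,2,3}" using I xy by auto
  hence "V_pair W I = 0" using W
    by (auto simp: V_pair_def seg_mixed_area_def det2_scale1 det2_scale2 det2_self)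
  hence "Phi W P = 0" unfolding Phi_def using I pp_facts(4)[OF P] by (metis prod_zero_iff)
  thus ?thesis unfolding if_not_P[OF False] .
next
  case True
  note cr = cross[OF P True]
  note D = pp_facts(3)[OF P]
  define f where "f x = \<bar>s x\<bar>" for x :: nat
  define g where "g y = \<bar>det2 a (W y)\<bar>/2" for y :: nat
  have MM: "Min I \<in> {1,2,3} \<and> Max I \<in> {4,5,6} \<and> I = {Min I, Max I}" if "I\<in>P" for I
    using cr[OF that] by auto
  have V: "V_pair W I = f (Min I) * g (Max I)" if "I \<in> P" for I
    using MM[OF that] W unfolding V_pair_def seg_mixed_area_def f_def g_def
    by (auto simp: det2_scale1 abs_mult)
  have b1: "bij_betw Min P {1,2,3}"
    unfolding bij_betw_def
  proof (intro conjI)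
    show "inj_on Min P"
    proof (rule inj_onI)
      fix I J assume "I\<in>P" "J\<in>P" "Min I = Min J"
      thus "I = J" using MM D by (metis IntI empty_iff insertI1)
    qed
    show "Min ` P = {1,2,3}"
    proof
      show "Min ` P \<subseteq> {1,2,3}" using MM by auto
      show "{1,2,3} \<subseteq> Min ` P"
      proof
        fix i :: nat assume i: "i \<in> {1,2,3}"
        have "i \<in> \<Union>P" using pp_facts(1)[OF P] i by auto
        then obtain J where J: "J\<in>P" "i\<in>J" by auto
        hence "i = Min J" using MM[OF J(1)] i by auto
        thus "i \<in> Min ` P" using J by auto
      qed
    qed
  qed
  have b2: "bij_betw Max P {4,5,6}"
    unfolding bij_betw_def
  proof (intro conjI)
    show "inj_on Max P"
    proof (rule inj_onI)
      fix I J assume "I\<in>P" "J\<in>P" "Max I = Max J"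
      thus "I = J" using MM D by (metis IntI empty_iff insertI1 insertI2)
    qed
    show "Max ` P = {4,5,6}"
    proof
      show "Max ` P \<subseteq> {4,5,6}" using MM by auto
      show "{4,5,6} \<subseteq> Max ` P"
      proof
        fix i :: nat assume i: "i \<in> {4,5,6}"
        have "i \<in> \<Union>P" using pp_facts(1)[OF P] i by auto
        then obtain J where J: "J\<in>P" "i\<in>J" by auto
        hence "i = Max J" using MM[OF J(1)] i by auto
        thus "i \<in> Max ` P" using J by auto
      qed
    qed
  qed
  have "Phi W P = (\<Prod>I\<in>P. f (Min I) * g (Max I))"
    unfolding Phi_def using V by (rule prod.cong[OF refl])
  also have "\<dots> = (\<Prod>I\<in>P. f (Min I)) * (\<Prod>I\<in>P. g (Max I))" by (rule prod.distrib)
  also have "\<dots> = (\<Prod>x\<in>{1,2,3}. f x) * (\<Prod>y\<in>{4,5,6}. g y)"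
    using prod.reindex_bij_betw[OF b1, of f] prod.reindex_bij_betw[OF b2, of g] by simp
  finally show ?thesis using True unfolding f_def g_def by simp
qed

lemma sp_obtain: "same_point u a \<Longrightarrow> \<exists>s. s \<noteq> 0 \<and> u = s *\<^sub>R a"
  unfolding same_point_def by blast

lemma P0: "{{1,4},{2,5},{3,6::nat}} \<in> pair_partitions"
  unfolding pair_partitions_def by auto

theorem lemma7p3:
  fixes a b c :: "real^2" and U U' :: "nat \<Rightarrow> real^2"
  assumes "a \<noteq> 0" "b \<noteq> 0" "c \<noteq> 0"
    and "\<not> same_point a b" "\<not> same_point a c" "\<not> same_point b c"
    and "\<forall>i\<in>{1,2,3}. same_point (U i) a" "\<forall>i\<in>{4,5,6}. same_point (U i) b"
    and "\<forall>i\<in>{1,2,3}. same_point (U' i) a" "\<forall>i\<in>{4,5}. same_point (U' i) b"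
    and "same_point (U' 6) c"
  shows "same_ray (Phi U) (Phi U')"
proof -
  have dab: "det2 a b \<noteq> 0" using det2_nz assms by blast
  have dac: "det2 a c \<noteq> 0" using det2_nz assms by blast
  have "\<forall>x\<in>{1,2,3::nat}. \<exists>S. S \<noteq> 0 \<and> U x = S *\<^sub>R a"
    using assms(7) sp_obtain by blast
  then obtain s where s: "\<forall>x\<in>{1,2,3::nat}. s x \<noteq> 0 \<and> U x = s x *\<^sub>R a"
    by (rule bchoice[elim_format]) blast
  have "\<forall>x\<in>{1,2,3::nat}. \<exists>S. S \<noteq> 0 \<and> U' x = S *\<^sub>R a"
    using assms(9) sp_obtain by blast
  then obtain s' where s': "\<forall>x\<in>{1,2,3::nat}. s' x \<noteq> 0 \<and> U' x = s' x *\<^sub>R a"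
    by (rule bchoice[elim_format]) blast
  have "\<forall>x\<in>{4,5,6::nat}. \<exists>S. S \<noteq> 0 \<and> U x = S *\<^sub>R b"
    using assms(8) sp_obtain by blast
  then obtain t where t: "\<forall>x\<in>{4,5,6::nat}. t x \<noteq> 0 \<and> U x = t x *\<^sub>R b"
    by (rule bchoice[elim_format]) blast
  have "\<forall>x\<in>{4,5::nat}. \<exists>S. S \<noteq> 0 \<and> U' x = S *\<^sub>R b"
    using assms(10) sp_obtain by blast
  then obtain t' where t': "\<forall>x\<in>{4,5::nat}. t' x \<noteq> 0 \<and> U' x = t' x *\<^sub>R b"
    by (rule bchoice[elim_format]) blast
  obtain r where r: "r \<noteq> 0" "U' 6 = r *\<^sub>R c" using sp_obtain assms(11) by blast
  define K where "K = (\<Prod>x\<in>{1,2,3::nat}. \<bar>s x\<bar>) * (\<Prod>y\<in>{4,5,6::nat}. \<bar>det2 a (U y)\<bar>/2)"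
  define K' where "K' = (\<Prod>x\<in>{1,2,3::nat}. \<bar>s' x\<bar>) * (\<Prod>y\<in>{4,5,6::nat}. \<bar>det2 a (U' y)\<bar>/2)"
  have Kp: "K > 0" unfolding K_def using s t dab
    by (auto simp: det2_scale2 abs_mult intro!: mult_pos_pos)
  have K'p: "K' > 0" unfolding K'_def using s' t' r dab dac
    by (auto simp: det2_scale2 abs_mult intro!: mult_pos_pos)
  have PU: "Phi U P = (if \<forall>I\<in>P. \<not> I \<subseteq> {1,2,3} then K else 0)" if "P \<in> pair_partitions" for P
    unfolding K_def by (rule phi_val[OF that]) (use s in auto)
  have PU': "Phi U' P = (if \<forall>I\<in>P. \<not> I \<subseteq> {1,2,3} then K' else 0)" if "P \<in> pair_partitions" for P
    unfolding K'_def by (rule phi_val[OF that]) (use s' in auto)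
  have cr0: "\<forall>I\<in>{{1,4},{2,5},{3,6::nat}}. \<not> I \<subseteq> {1,2,3}" by auto
  show ?thesis unfolding same_ray_def
  proof (intro conjI)
    have "Phi U {{1,4},{2,5},{3,6::nat}} = K" using PU[OF P0] cr0 by simp
    thus "\<exists>P\<in>pair_partitions. Phi U P \<noteq> 0"
      using P0 Kp by (intro bexI[OF _ P0]) simp
    have "Phi U' {{1,4},{2,5},{3,6::nat}} = K'" using PU'[OF P0] cr0 by simp
    thus "\<exists>P\<in>pair_partitions. Phi U' P \<noteq> 0"
      using P0 K'p by (intro bexI[OF _ P0]) simp
    show "\<exists>t>0. \<forall>P\<in>pair_partitions. Phi U P = t * Phi U' P"
      using Kp K'p PU PU' by (intro exI[of _ "K / K'"]) auto
  qed
qed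

end
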